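(* Assume the standing setting below. Let $\psi:(0,\infty)\to(0,\infty)$ be nonincreasing, bounded, and slowly varying (for each $K>0$ there are constants $0<c_K\le C_K$ with $c_K\psi(q)\le\psi(Kq)\le C_K\psi(q)$ for all $q$). Put $\Psi(t):=-\log\psi(e^t)$. Then a point $x=\pi(\omega)\in J$ is badly symbolically approximable with respect to $\psi$ if and only if there exists $K<\infty$ such that for every $\ell\in\mathbb{N}$ and every finite word $\eta$ of length $r$ which occurs at two distinct positions (possibly overlapping) in the initial segment $\omega_1^\ell=(\omega_1,\dots,\omega_\ell)$, we have \[ \ell_{\mathrm p}(\eta)\le K+\Psi\big(\ell_{\mathrm p}(\omega_1^{\ell-r})\big). \]
   Context: Standing setting: $(u_a)_{a\in E}$ is a rational IFS on $\mathbb{R}$, $u_a(x)=\frac{p_a}{q_a}x+\frac{r_a}{q_a}$ with $p_a\in\{\pm1\}$, $r_a\in\mathbb{Z}$, $q_a\in\mathbb{N}$, $q_a\ge2$, satisfying the strong separation condition: there is a closed interval $I$ such that the sets $u_a(I)$, $a\in E$, are pairwise disjoint subsets of $I$. $\pi(\omega)=\lim_n u_{\omega_1}\circ\cdots\circ u_{\omega_n}(0)$ is the coding map (a bijection onto the limit set $J$), and every rational in $J$ has an eventually periodic coding. Intrinsic denominator: for $p/q\in\mathbb{Q}\cap J$ with coding $\omega$, let $n\ge0$ be minimal such that $(\omega_{i})_{i>n}$ is periodic and $m\ge1$ its minimal period; set $q_{(1)}=\prod_{i=1}^n q_{\omega_i}$, $q_{(2)}=\prod_{i=1}^m q_{\omega_{n+i}}$,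 $p_{(2)}=\prod_{i=1}^m p_{\omega_{n+i}}$, and $q_{\mathrm{int}}:=q_{(1)}(q_{(2)}-p_{(2)})$. A point $x\in J$ is badly symbolically approximable w.r.t. $\psi$ if there is $\varepsilon>0$ such that $|x-p/q|\ge\varepsilon\psi(q_{\mathrm{int}})/q_{\mathrm{int}}$ for all $p/q\in\mathbb{Q}\cap J$; otherwise symbolically well approximable. The pseudolength of a finite word $\eta=(\eta_1,\dots,\eta_r)$ is $\ell_{\mathrm p}(\eta)=\sum_{i=1}^r\log q_{\eta_i}$. *)

theory Defs
  imports Complex_Main
begin

text \<open>Rational IFS: u_a(x) = (p_a/q_a) x + r_a/q_a. Words are sequences
  indexed from 0 (omega 0 is the paper's omega_1).\<close>

definition ifs_map :: "('a \<Rightarrow> int) \<Rightarrow> ('a \<Rightarrow> nat) \<Rightarrow> ('a \<Rightarrow> int) \<Rightarrow> 'a \<Rightarrow> real \<Rightarrow> real" where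
  "ifs_map p q r a x = (of_int (p a) / of_nat (q a)) * x + of_int (r a) / of_nat (q a)"

definition rational_IFS :: "'a set \<Rightarrow> ('a \<Rightarrow> int) \<Rightarrow> ('a \<Rightarrow> nat) \<Rightarrow> ('a \<Rightarrow> int) \<Rightarrow> bool" where
  "rational_IFS E p q r \<longleftrightarrow> finite E \<and> E \<noteq> {} \<and>
     (\<forall>a\<in>E. (p a = 1 \<or> p a = -1) \<and> q a \<ge> 2)"

definition strong_separation :: "'a set \<Rightarrow> ('a \<Rightarrow> real \<Rightarrow> real) \<Rightarrow> bool" where
  "strong_separation E u \<longleftrightarrow> (\<exists>lo hi. lo \<le> hi \<and>
     (\<forall>a\<in>E. u a ` {lo..hi} \<subseteq> {lo..hi}) \<and>
     (\<forall>a\<in>E. \<forall>b\<in>E. a \<noteq> b \<longrightarrow> u a ` {lo..hi} \<inter> u b ` {lo..hi} = {}))"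

fun word_comp :: "('a \<Rightarrow> real \<Rightarrow> real) \<Rightarrow> (nat \<Rightarrow> 'a) \<Rightarrow> nat \<Rightarrow> real \<Rightarrow> real" where
  "word_comp u \<omega> 0 x = x"
| "word_comp u \<omega> (Suc n) x = word_comp u \<omega> n (u (\<omega> n) x)"

definition coding_map :: "('a \<Rightarrow> real \<Rightarrow> real) \<Rightarrow> (nat \<Rightarrow> 'a) \<Rightarrow> real" where
  "coding_map u \<omega> = lim (\<lambda>n. word_comp u \<omega> n 0)"

definition words :: "'a set \<Rightarrow> (nat \<Rightarrow> 'a) set" where
  "words E = {\<omega>. \<forall>i. \<omega> i \<in> E}"

definition limit_set :: "'a set \<Rightarrow> ('a \<Rightarrow> real \<Rightarrow> real) \<Rightarrow> real set" where
  "limit_set E u = coding_map u ` words E"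

definition preperiod :: "(nat \<Rightarrow> 'a) \<Rightarrow> nat" where
  "preperiod \<omega> = (LEAST n. \<exists>m>0. \<forall>i\<ge>n. \<omega> (i + m) = \<omega> i)"

definition min_period :: "(nat \<Rightarrow> 'a) \<Rightarrow> nat" where
  "min_period \<omega> = (LEAST m. m > 0 \<and> (\<forall>i\<ge>preperiod \<omega>. \<omega> (i + m) = \<omega> i))"

definition intrinsic_denom :: "('a \<Rightarrow> int) \<Rightarrow> ('a \<Rightarrow> nat) \<Rightarrow> (nat \<Rightarrow> 'a) \<Rightarrow> int" where
  "intrinsic_denom p q \<omega> =
     (let n = preperiod \<omega>; m = min_period \<omega>;
          q1 = (\<Prod>i<n. int (q (\<omega> i)));
          q2 = (\<Prod>i<m. int (q (\<omega> (n + i))));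
          p2 = (\<Prod>i<m. p (\<omega> (n + i)))
      in q1 * (q2 - p2))"

text \<open>Badly symbolically approximable: quantification over rationals of J
  is done via their codings (pi is a bijection onto J).\<close>
definition badly_symb_approx ::
  "'a set \<Rightarrow> ('a \<Rightarrow> int) \<Rightarrow> ('a \<Rightarrow> nat) \<Rightarrow> ('a \<Rightarrow> int) \<Rightarrow> (real \<Rightarrow> real) \<Rightarrow> real \<Rightarrow> bool" where
  "badly_symb_approx E p q r \<psi> x \<longleftrightarrow>
     (\<exists>\<epsilon>>0. \<forall>\<omega>\<in>words E. coding_map (ifs_map p q r) \<omega> \<in> \<rat> \<longrightarrow>
        \<bar>x - coding_map (ifs_map p q r) \<omega>\<bar> \<ge>
          \<epsilon> * \<psi> (of_int (intrinsic_denom p q \<omega>)) / of_int (intrinsic_denom p q \<omega>))"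

definition pseudolength :: "('a \<Rightarrow> nat) \<Rightarrow> 'a list \<Rightarrow> real" where
  "pseudolength q \<eta> = (\<Sum>a\<leftarrow>\<eta>. ln (real (q a)))"

text \<open>omega_{s+1}..omega_{s+k} (0-indexed start s, length k).\<close>
definition subword :: "(nat \<Rightarrow> 'a) \<Rightarrow> nat \<Rightarrow> nat \<Rightarrow> 'a list" where
  "subword \<omega> s k = map \<omega> [s..<s + k]"

definition slowly_varying :: "(real \<Rightarrow> real) \<Rightarrow> bool" where
  "slowly_varying \<psi> \<longleftrightarrow> (\<forall>K>0. \<exists>c C. 0 < c \<and> c \<le> C \<and>
      (\<forall>t>0. c * \<psi> t \<le> \<psi> (K * t) \<and> \<psi> (K * t) \<le> C * \<psi> t))"

definition log_psi :: "(real \<Rightarrow> real) \<Rightarrow> real \<Rightarrow> real" where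
  "log_psi \<psi> t = - ln (\<psi> (exp t))"

end

theory Submission imports Defs "HOL-Analysis.Analysis" begin

definition shiftw :: "nat \<Rightarrow> (nat \<Rightarrow> 'a) \<Rightarrow> nat \<Rightarrow> 'a" where
  "shiftw k \<omega> = (\<lambda>i. \<omega> (k + i))"

definition Pw :: "('a \<Rightarrow> nat) \<Rightarrow> (nat \<Rightarrow> 'a) \<Rightarrow> nat \<Rightarrow> nat \<Rightarrow> real" where
  "Pw q \<omega> s k = (\<Prod>i<k. real (q (\<omega> (s + i))))"

lemma Pw_Suc: "Pw q \<omega> s (Suc k) = Pw q \<omega> s k * real (q (\<omega> (s + k)))"
  by (simp add: Pw_def)

lemma Pw_0[simp]: "Pw q \<omega> s 0 = 1"
  by (simp add: Pw_def)

lemma Pw_add: "Pw q \<omega> s (a + b) = Pw q \<omega> s a * Pw q \<omega> (s + a) b"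
  by (induction b) (simp_all add: Pw_Suc add.assoc)

lemma Pw_cong: "(\<And>i. i < k \<Longrightarrow> \<omega> (s + i) = \<omega>' (s' + i)) \<Longrightarrow> Pw q \<omega> s k = Pw q \<omega>' s' k"
  unfolding Pw_def by (rule prod.cong) auto

lemma shiftw_shiftw[simp]: "shiftw a (shiftw b \<omega>) = shiftw (b + a) \<omega>"
  by (simp add: shiftw_def add.assoc)

lemma shiftw_apply[simp]: "shiftw k \<omega> i = \<omega> (k + i)"
  by (simp add: shiftw_def)

lemma shiftw_0[simp]: "shiftw 0 \<omega> = \<omega>"
  by (simp add: shiftw_def)

lemma wc_add: "word_comp u \<omega> (k + n) x = word_comp u \<omega> k (word_comp u (shiftw k \<omega>) n x)"
  by (induction n arbitrary: x) simp_all

lemma wc_cong: "(\<And>i. i < k \<Longrightarrow> \<omega> i = \<omega>' i) \<Longrightarrow> word_comp u \<omega> k x = word_comp u \<omega>' k x"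
  by (induction k arbitrary: x) simp_all

lemma wc_1: "word_comp u \<omega> 1 x = u (\<omega> 0) x"
  by simp

lemma pseudolength_subword: "pseudolength q (subword \<omega> s k) = (\<Sum>i<k. ln (real (q (\<omega> (s + i)))))"
proof -
  have "pseudolength q (subword \<omega> s k) = (\<Sum>j\<in>{s..<s+k}. ln (real (q (\<omega> j))))"
    unfolding pseudolength_def subword_def
    by (simp add: sum_set_upt_conv_sum_list_nat[symmetric] o_def)
  also have "\<dots> = (\<Sum>i<k. ln (real (q (\<omega> (s + i)))))"
    by (rule sum.reindex_bij_witness[where i="\<lambda>j. j + s" and j="\<lambda>i. i - s"]) auto
  finally show ?thesis .
qed

lemma half_pow: "(x::real) / 2^m = x * (1/2)^m" by (simp add: power_divide)

context
  fixes E :: "'a set" and p :: "'a \<Rightarrow> int" and q :: "'a \<Rightarrow> nat" and r :: "'a \<Rightarrow> int"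
  assumes ifs: "rational_IFS E p q r"
begin

lemma qE: "a \<in> E \<Longrightarrow> q a \<ge> 2" using ifs by (auto simp: rational_IFS_def)
lemma pE: "a \<in> E \<Longrightarrow> p a = 1 \<or> p a = -1" using ifs by (auto simp: rational_IFS_def)

lemma Pw_ge: assumes "\<omega> \<in> words E" shows "Pw q \<omega> s k \<ge> 2 ^ k"
proof (induction k)
  case (Suc k)
  have "real (q (\<omega> (s + k))) \<ge> 2" using qE[of "\<omega> (s+k)"] assms by (auto simp: words_def)
  moreover have "(0::real) \<le> 2 ^ k" by simp
  ultimately have "2 ^ k * 2 \<le> Pw q \<omega> s k * real (q (\<omega> (s + k)))"
    using Suc by (intro mult_mono) (auto intro: order.trans[OF \<open>(0::real) \<le> 2 ^ k\<close>])
  then show ?case by (simp add: Pw_Suc mult.commute)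
qed simp

lemma Pw_pos: "\<omega> \<in> words E \<Longrightarrow> Pw q \<omega> s k > 0"
  using Pw_ge[where s=s and k=k] by (smt (verit) zero_less_power)

lemma Pw_ge1: "\<omega> \<in> words E \<Longrightarrow> Pw q \<omega> s k \<ge> 1"
  using Pw_ge[where s=s and k=k] by (smt (verit) one_le_power)

lemma Pw_mono: assumes "\<omega> \<in> words E" "k \<le> k'" shows "Pw q \<omega> s k \<le> Pw q \<omega> s k'"
proof -
  obtain d where "k' = k + d" using assms(2) le_Suc_ex by blast
  then show ?thesis using Pw_add[of q \<omega> s k d] Pw_ge1[OF assms(1), of "s+k" d] Pw_pos[OF assms(1), of s k]
    by simp
qed

lemma exp_pseudolength: assumes "\<omega> \<in> words E"
  shows "exp (pseudolength q (subword \<omega> s k)) = Pw q \<omega> s k"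
proof -
  have "\<And>i. real (q (\<omega> (s + i))) > 0"
  proof -
    fix i have "q (\<omega> (s + i)) \<ge> 2" using qE assms by (simp add: words_def)
    then show "real (q (\<omega> (s + i))) > 0" by simp
  qed
  then show ?thesis unfolding pseudolength_subword Pw_def by (simp add: exp_sum)
qed

lemma shiftw_words: "\<omega> \<in> words E \<Longrightarrow> shiftw k \<omega> \<in> words E"
  by (simp add: words_def)

lemma wc_affine:
  assumes "\<omega> \<in> words E"
  shows "\<exists>a b. a \<in> \<rat> \<and> b \<in> \<rat> \<and> \<bar>a\<bar> = 1 / Pw q \<omega> 0 k \<and>
    (\<forall>x. word_comp (ifs_map p q r) \<omega> k x = a * x + b)"
proof (induction k)
  case 0
  show ?case by (rule exI[of _ 1], rule exI[of _ 0]) simp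
next
  case (Suc k)
  then obtain a b where ab: "a \<in> \<rat>" "b \<in> \<rat>" "\<bar>a\<bar> = 1 / Pw q \<omega> 0 k"
    "\<forall>x. word_comp (ifs_map p q r) \<omega> k x = a * x + b" by blast
  define c where "c = \<omega> k"
  have cE: "c \<in> E" using assms by (simp add: words_def c_def)
  have qc: "real (q c) \<ge> 2" using qE[OF cE] by simp
  have pc: "\<bar>real_of_int (p c)\<bar> = 1" using pE[OF cE] by auto
  show ?case
  proof (intro exI conjI allI)
    show "a * (of_int (p c) / of_nat (q c)) \<in> \<rat>" using ab by simp
    show "a * (of_int (r c) / of_nat (q c)) + b \<in> \<rat>" using ab by simp
    show "\<bar>a * (of_int (p c) / of_nat (q c))\<bar> = 1 / Pw q \<omega> 0 (Suc k)"
      using ab(3) pc qc by (simp add: Pw_Suc c_def abs_mult)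
    fix x
    show "word_comp (ifs_map p q r) \<omega> (Suc k) x =
        a * (of_int (p c) / of_nat (q c)) * x + (a * (of_int (r c) / of_nat (q c)) + b)"
      using ab(4) by (simp add: ifs_map_def c_def algebra_simps)
  qed
qed

lemma wc_dist:
  assumes "\<omega> \<in> words E"
  shows "\<bar>word_comp (ifs_map p q r) \<omega> k x - word_comp (ifs_map p q r) \<omega> k y\<bar> = \<bar>x - y\<bar> / Pw q \<omega> 0 k"
proof -
  obtain a b where ab: "\<bar>a\<bar> = 1 / Pw q \<omega> 0 k"
    "\<forall>x. word_comp (ifs_map p q r) \<omega> k x = a * x + b" using wc_affine[OF assms] by blast
  show ?thesis using ab by (simp add: right_diff_distrib[symmetric] abs_mult)
qed


context
  fixes lo hi :: real
  assumes lohi: "lo \<le> hi"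
    and inv: "\<forall>a\<in>E. ifs_map p q r a ` {lo..hi} \<subseteq> {lo..hi}"
    and disj: "\<forall>a\<in>E. \<forall>b\<in>E. a \<noteq> b \<longrightarrow> ifs_map p q r a ` {lo..hi} \<inter> ifs_map p q r b ` {lo..hi} = {}"
begin

lemma wc_in: "\<omega> \<in> words E \<Longrightarrow> x \<in> {lo..hi} \<Longrightarrow> word_comp (ifs_map p q r) \<omega> k x \<in> {lo..hi}"
proof (induction k arbitrary: x)
  case (Suc k)
  have "\<omega> k \<in> E" using Suc.prems by (auto simp: words_def)
  then have sub: "ifs_map p q r (\<omega> k) ` {lo..hi} \<subseteq> {lo..hi}" using inv by (rule bspec[rotated])
  have h: "ifs_map p q r (\<omega> k) x \<in> {lo..hi}" by (rule subsetD[OF sub imageI[OF Suc.prems(2)]])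
  show ?case unfolding word_comp.simps by (rule Suc.IH[OF Suc.prems(1) h])
qed simp

lemma wc_cauchy_bound:
  assumes "\<omega> \<in> words E" "m \<le> n"
  shows "\<bar>word_comp (ifs_map p q r) \<omega> n lo - word_comp (ifs_map p q r) \<omega> m lo\<bar> \<le> (hi - lo) * (1/2) ^ m"
proof -
  obtain d where n: "n = m + d" using assms(2) le_Suc_ex by blast
  define y where "y = word_comp (ifs_map p q r) (shiftw m \<omega>) d lo"
  have y: "y \<in> {lo..hi}" unfolding y_def using wc_in shiftw_words assms(1) lohi by auto
  have "\<bar>word_comp (ifs_map p q r) \<omega> n lo - word_comp (ifs_map p q r) \<omega> m lo\<bar> = \<bar>y - lo\<bar> / Pw q \<omega> 0 m"
    unfolding n wc_add y_def[symmetric] using wc_dist[OF assms(1)] by simp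
  also have "\<dots> \<le> (hi - lo) / 2 ^ m"
  proof (rule frac_le)
    show "0 \<le> hi - lo" using lohi by simp
    show "\<bar>y - lo\<bar> \<le> hi - lo" using y by simp
    show "0 < (2::real) ^ m" by simp
    show "(2::real) ^ m \<le> Pw q \<omega> 0 m" using Pw_ge[OF assms(1), where s=0 and k=m] by simp
  qed
  finally show ?thesis by (simp only: half_pow)
qed

lemma wc_conv:
  assumes "\<omega> \<in> words E"
  shows "(\<lambda>n. word_comp (ifs_map p q r) \<omega> n x) \<longlonglongrightarrow> coding_map (ifs_map p q r) \<omega>"
    and "coding_map (ifs_map p q r) \<omega> \<in> {lo..hi}"
proof -
  define f where "f n = word_comp (ifs_map p q r) \<omega> n lo" for n
  have "Cauchy f"
  proof (rule CauchyI')
    fix e :: real assume e: "0 < e"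
    obtain M where M: "(1/2::real) ^ M < e / (hi - lo + 1)"
      using real_arch_pow_inv[of "e / (hi - lo + 1)" "1/2"] e lohi by auto
    show "\<exists>M. \<forall>m\<ge>M. \<forall>n>m. dist (f m) (f n) < e"
    proof (intro exI allI impI)
      fix m n assume mn: "M \<le> m" "m < n"
      have "dist (f m) (f n) \<le> (hi - lo) * (1/2) ^ m"
        using wc_cauchy_bound[OF assms, of m n] mn by (simp add: f_def dist_real_def abs_minus_commute)
      also have "\<dots> \<le> (hi - lo) * (1/2) ^ M"
        using mn lohi by (intro mult_left_mono power_decreasing) auto
      also have "\<dots> \<le> (hi - lo + 1) * (1/2) ^ M" by (simp add: mult_right_mono)
      also have "\<dots> < e" using M lohi by (simp add: field_simps)
      finally show "dist (f m) (f n) < e" .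
    qed
  qed
  then obtain l where l: "f \<longlonglongrightarrow> l" using Cauchy_convergent_iff convergent_def by blast
  have gen: "(\<lambda>n. word_comp (ifs_map p q r) \<omega> n x) \<longlonglongrightarrow> l" for x
  proof -
    have "(\<lambda>n. word_comp (ifs_map p q r) \<omega> n x - f n) \<longlonglongrightarrow> 0"
    proof (rule Lim_null_comparison)
      show "\<forall>\<^sub>F n in sequentially. norm (word_comp (ifs_map p q r) \<omega> n x - f n) \<le> \<bar>x - lo\<bar> * (1/2) ^ n"
      proof (rule always_eventually, rule allI)
        fix n
        have "norm (word_comp (ifs_map p q r) \<omega> n x - f n) = \<bar>x - lo\<bar> / Pw q \<omega> 0 n"
          using wc_dist[OF assms] by (simp add: f_def)
        also have "\<dots> \<le> \<bar>x - lo\<bar> / 2 ^ n"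
          using Pw_ge[OF assms, where s=0 and k=n] Pw_pos[OF assms, of 0 n] by (intro divide_left_mono) auto
        finally show "norm (word_comp (ifs_map p q r) \<omega> n x - f n) \<le> \<bar>x - lo\<bar> * (1/2) ^ n"
          by (simp only: half_pow)
      qed
      show "(\<lambda>n. \<bar>x - lo\<bar> * (1/2::real) ^ n) \<longlonglongrightarrow> 0"
        by (intro tendsto_mult_right_zero LIMSEQ_power_zero) simp
    qed
    from tendsto_add[OF this l] show ?thesis by simp
  qed
  have pl: "coding_map (ifs_map p q r) \<omega> = l"
    unfolding coding_map_def using gen[of 0] by (rule limI)
  show "(\<lambda>n. word_comp (ifs_map p q r) \<omega> n x) \<longlonglongrightarrow> coding_map (ifs_map p q r) \<omega>"
    using gen pl by simp
  have "\<forall>n. f n \<in> {lo..hi}" unfolding f_def using wc_in[OF assms] lohi by auto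
  then have "lo \<le> l" "l \<le> hi"
    using LIMSEQ_le_const[OF l, of lo] LIMSEQ_le_const2[OF l, of hi] by auto
  then show "coding_map (ifs_map p q r) \<omega> \<in> {lo..hi}" using pl by simp
qed

lemma pi_shift:
  assumes "\<omega> \<in> words E"
  shows "coding_map (ifs_map p q r) \<omega> =
    word_comp (ifs_map p q r) \<omega> k (coding_map (ifs_map p q r) (shiftw k \<omega>))"
proof -
  obtain a b where ab: "\<forall>x. word_comp (ifs_map p q r) \<omega> k x = a * x + b"
    using wc_affine[OF assms] by blast
  have 1: "(\<lambda>n. word_comp (ifs_map p q r) \<omega> (n + k) 0) \<longlonglongrightarrow> coding_map (ifs_map p q r) \<omega>"
    using LIMSEQ_ignore_initial_segment[OF wc_conv(1)[OF assms]] .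
  have "(\<lambda>n. a * word_comp (ifs_map p q r) (shiftw k \<omega>) n 0 + b) \<longlonglongrightarrow>
        a * coding_map (ifs_map p q r) (shiftw k \<omega>) + b"
    by (intro tendsto_intros wc_conv(1) shiftw_words assms)
  moreover have "word_comp (ifs_map p q r) \<omega> (n + k) 0 = a * word_comp (ifs_map p q r) (shiftw k \<omega>) n 0 + b" for n
    using wc_add[of "ifs_map p q r" \<omega> k n 0] ab by (simp add: add.commute)
  ultimately have "(\<lambda>n. word_comp (ifs_map p q r) \<omega> (n + k) 0) \<longlonglongrightarrow>
        a * coding_map (ifs_map p q r) (shiftw k \<omega>) + b" by simp
  from LIMSEQ_unique[OF 1 this] show ?thesis using ab by simp
qed

lemma pi_in: "\<omega> \<in> words E \<Longrightarrow> coding_map (ifs_map p q r) \<omega> \<in> {lo..hi}"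
  using wc_conv(2) .

lemma pi_dist:
  assumes "\<omega> \<in> words E" "\<omega>' \<in> words E" "\<And>i. i < k \<Longrightarrow> \<omega> i = \<omega>' i"
  shows "\<bar>coding_map (ifs_map p q r) \<omega> - coding_map (ifs_map p q r) \<omega>'\<bar> =
    \<bar>coding_map (ifs_map p q r) (shiftw k \<omega>) - coding_map (ifs_map p q r) (shiftw k \<omega>')\<bar> / Pw q \<omega> 0 k"
proof -
  have "coding_map (ifs_map p q r) \<omega>' =
    word_comp (ifs_map p q r) \<omega> k (coding_map (ifs_map p q r) (shiftw k \<omega>'))"
    using pi_shift[OF assms(2), of k] wc_cong[of k \<omega> \<omega>'] assms(3) by metis
  then show ?thesis using pi_shift[OF assms(1), of k] wc_dist[OF assms(1)] by simp
qed


lemma ifs_cont: "continuous_on S (ifs_map p q r a)"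
  unfolding ifs_map_def by (intro continuous_intros)

lemma gap: "\<exists>\<delta>>0. \<forall>a\<in>E. \<forall>b\<in>E. a \<noteq> b \<longrightarrow>
   (\<forall>y\<in>{lo..hi}. \<forall>z\<in>{lo..hi}. \<delta> \<le> \<bar>ifs_map p q r a y - ifs_map p q r b z\<bar>)"
proof -
  define F where "F = {(a,b). a \<in> E \<and> b \<in> E \<and> a \<noteq> b}"
  have finF: "finite F" using ifs unfolding F_def rational_IFS_def
    by (rule_tac finite_subset[of _ "E \<times> E"]) auto
  have "\<forall>x\<in>F. \<exists>d>0. \<forall>y\<in>{lo..hi}. \<forall>z\<in>{lo..hi}. d \<le> \<bar>ifs_map p q r (fst x) y - ifs_map p q r (snd x) z\<bar>"
  proof
    fix x assume x: "x \<in> F"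
    obtain a b where ab: "x = (a,b)" "a \<in> E" "b \<in> E" "a \<noteq> b" using x F_def by auto
    have c1: "compact (ifs_map p q r a ` {lo..hi})"
      by (intro compact_continuous_image ifs_cont compact_Icc)
    have c2: "closed (ifs_map p q r b ` {lo..hi})"
      by (intro compact_imp_closed compact_continuous_image ifs_cont compact_Icc)
    obtain d where d: "d > 0" "\<forall>y\<in>ifs_map p q r a ` {lo..hi}. \<forall>z\<in>ifs_map p q r b ` {lo..hi}. d \<le> dist y z"
      using separate_compact_closed[OF c1 c2] disj ab by blast
    show "\<exists>d>0. \<forall>y\<in>{lo..hi}. \<forall>z\<in>{lo..hi}. d \<le> \<bar>ifs_map p q r (fst x) y - ifs_map p q r (snd x) z\<bar>"
      using d ab by (auto simp: dist_real_def)
  qed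
  then obtain d where d: "\<forall>x\<in>F. d x > 0 \<and> (\<forall>y\<in>{lo..hi}. \<forall>z\<in>{lo..hi}. d x \<le> \<bar>ifs_map p q r (fst x) y - ifs_map p q r (snd x) z\<bar>)"
    by metis
  define \<delta> where "\<delta> = Min (insert 1 (d ` F))"
  have "\<delta> > 0" unfolding \<delta>_def using finF d by (subst Min_gr_iff) auto
  moreover have "\<forall>a\<in>E. \<forall>b\<in>E. a \<noteq> b \<longrightarrow>
   (\<forall>y\<in>{lo..hi}. \<forall>z\<in>{lo..hi}. \<delta> \<le> \<bar>ifs_map p q r a y - ifs_map p q r b z\<bar>)"
  proof (intro ballI impI)
    fix a b y z assume H: "a \<in> E" "b \<in> E" "a \<noteq> b" "y \<in> {lo..hi}" "z \<in> {lo..hi}"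
    then have ab: "(a,b) \<in> F" by (simp add: F_def)
    have "\<delta> \<le> d (a,b)" unfolding \<delta>_def using finF ab by (intro Min_le) auto
    also have "\<dots> \<le> \<bar>ifs_map p q r a y - ifs_map p q r b z\<bar>" using d ab H by force
    finally show "\<delta> \<le> \<bar>ifs_map p q r a y - ifs_map p q r b z\<bar>" .
  qed
  ultimately show ?thesis by blast
qed

lemma pi_cons:
  assumes "\<omega> \<in> words E"
  shows "coding_map (ifs_map p q r) \<omega> = ifs_map p q r (\<omega> 0) (coding_map (ifs_map p q r) (shiftw 1 \<omega>))"
  using pi_shift[OF assms, of 1] by simp

lemma pi_far: "\<exists>\<delta>>0. \<forall>\<omega>\<in>words E. \<forall>\<omega>'\<in>words E. \<forall>k. (\<forall>i<k. \<omega> i = \<omega>' i) \<and> \<omega> k \<noteq> \<omega>' k \<longrightarrow>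
   \<delta> / Pw q \<omega> 0 k \<le> \<bar>coding_map (ifs_map p q r) \<omega> - coding_map (ifs_map p q r) \<omega>'\<bar>"
proof -
  obtain \<delta> where \<delta>: "\<delta> > 0" "\<forall>a\<in>E. \<forall>b\<in>E. a \<noteq> b \<longrightarrow>
   (\<forall>y\<in>{lo..hi}. \<forall>z\<in>{lo..hi}. \<delta> \<le> \<bar>ifs_map p q r a y - ifs_map p q r b z\<bar>)" using gap by blast
  have "\<forall>\<omega>\<in>words E. \<forall>\<omega>'\<in>words E. \<forall>k. (\<forall>i<k. \<omega> i = \<omega>' i) \<and> \<omega> k \<noteq> \<omega>' k \<longrightarrow>
   \<delta> / Pw q \<omega> 0 k \<le> \<bar>coding_map (ifs_map p q r) \<omega> - coding_map (ifs_map p q r) \<omega>'\<bar>"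
  proof (intro ballI allI impI)
    fix \<omega> \<omega>' k assume w: "\<omega> \<in> words E" "\<omega>' \<in> words E" and H: "(\<forall>i<k. \<omega> i = \<omega>' i) \<and> \<omega> k \<noteq> \<omega>' k"
    define \<alpha> where "\<alpha> = shiftw k \<omega>"
    define \<beta> where "\<beta> = shiftw k \<omega>'"
    have ab: "\<alpha> \<in> words E" "\<beta> \<in> words E" using w shiftw_words \<alpha>_def \<beta>_def by auto
    have E1: "\<alpha> 0 \<in> E" "\<beta> 0 \<in> E" using ab by (simp_all add: words_def)
    have E: "\<alpha> 0 \<in> E" "\<beta> 0 \<in> E" "\<alpha> 0 \<noteq> \<beta> 0" using E1 H by (simp_all add: \<alpha>_def \<beta>_def)
    have "\<delta> \<le> \<bar>coding_map (ifs_map p q r) \<alpha> - coding_map (ifs_map p q r) \<beta>\<bar>"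
      unfolding pi_cons[OF ab(1)] pi_cons[OF ab(2)]
      using \<delta>(2) E pi_in[OF shiftw_words[OF ab(1)]] pi_in[OF shiftw_words[OF ab(2)]] by blast
    moreover have eq: "\<bar>coding_map (ifs_map p q r) \<omega> - coding_map (ifs_map p q r) \<omega>'\<bar> =
      \<bar>coding_map (ifs_map p q r) \<alpha> - coding_map (ifs_map p q r) \<beta>\<bar> / Pw q \<omega> 0 k"
      unfolding \<alpha>_def \<beta>_def by (rule pi_dist[OF w]) (use H in auto)
    ultimately show "\<delta> / Pw q \<omega> 0 k \<le> \<bar>coding_map (ifs_map p q r) \<omega> - coding_map (ifs_map p q r) \<omega>'\<bar>"
      using Pw_pos[OF w(1), of 0 k] by (simp add: divide_right_mono)
  qed
  then show ?thesis using \<delta>(1) by blast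
qed

lemma pi_close:
  assumes "\<omega> \<in> words E" "\<omega>' \<in> words E" "\<And>i. i < k \<Longrightarrow> \<omega> i = \<omega>' i"
  shows "\<bar>coding_map (ifs_map p q r) \<omega> - coding_map (ifs_map p q r) \<omega>'\<bar> \<le> (hi - lo) / Pw q \<omega> 0 k"
proof -
  have eq: "\<bar>coding_map (ifs_map p q r) \<omega> - coding_map (ifs_map p q r) \<omega>'\<bar> =
    \<bar>coding_map (ifs_map p q r) (shiftw k \<omega>) - coding_map (ifs_map p q r) (shiftw k \<omega>')\<bar> / Pw q \<omega> 0 k"
    by (rule pi_dist[OF assms])
  show ?thesis unfolding eq
  using pi_in[OF shiftw_words[OF assms(1)], of k] pi_in[OF shiftw_words[OF assms(2)], of k]
    Pw_pos[OF assms(1), of 0 k]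
  by (intro divide_right_mono) auto
qed

lemma pi_inj:
  assumes "\<alpha> \<in> words E" "\<beta> \<in> words E" "coding_map (ifs_map p q r) \<alpha> = coding_map (ifs_map p q r) \<beta>"
  shows "\<alpha> = \<beta>"
proof (rule ccontr)
  assume ne: "\<alpha> \<noteq> \<beta>"
  then have "\<exists>i. \<alpha> i \<noteq> \<beta> i" by auto
  define k where "k = (LEAST i. \<alpha> i \<noteq> \<beta> i)"
  have k: "\<alpha> k \<noteq> \<beta> k" using LeastI_ex[OF \<open>\<exists>i. \<alpha> i \<noteq> \<beta> i\<close>] k_def by simp
  have lt: "\<forall>i<k. \<alpha> i = \<beta> i" using not_less_Least k_def by blast
  obtain \<delta> where \<delta>: "\<delta> > 0" "\<forall>\<omega>\<in>words E. \<forall>\<omega>'\<in>words E. \<forall>k. (\<forall>i<k. \<omega> i = \<omega>' i) \<and> \<omega> k \<noteq> \<omega>' k \<longrightarrow>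
   \<delta> / Pw q \<omega> 0 k \<le> \<bar>coding_map (ifs_map p q r) \<omega> - coding_map (ifs_map p q r) \<omega>'\<bar>"
    using pi_far by blast
  have "\<delta> / Pw q \<alpha> 0 k \<le> 0" using \<delta>(2) assms k lt by fastforce
  moreover have "\<delta> / Pw q \<alpha> 0 k > 0" using \<delta>(1) Pw_pos[OF assms(1)] by simp
  ultimately show False by simp
qed


lemma pi_per_rat:
  assumes w: "\<omega> \<in> words E" and d: "d > 0" and per: "\<forall>i\<ge>s. \<omega> (i + d) = \<omega> i"
  shows "coding_map (ifs_map p q r) \<omega> \<in> \<rat>"
proof -
  define \<alpha> where "\<alpha> = shiftw s \<omega>"
  have a: "\<alpha> \<in> words E" using w by (simp add: \<alpha>_def shiftw_words)
  have sh: "shiftw d \<alpha> = \<alpha>"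
  proof
    fix i have "\<omega> ((s + i) + d) = \<omega> (s + i)" using per by simp
    then show "shiftw d \<alpha> i = \<alpha> i" by (simp add: \<alpha>_def add_ac)
  qed
  define y where "y = coding_map (ifs_map p q r) \<alpha>"
  obtain a b where ab: "a \<in> \<rat>" "b \<in> \<rat>" "\<bar>a\<bar> = 1 / Pw q \<alpha> 0 d"
    "\<forall>x. word_comp (ifs_map p q r) \<alpha> d x = a * x + b" using wc_affine[OF a] by blast
  have "Pw q \<alpha> 0 d \<ge> 2"
  proof -
    have "(2::real) \<le> 2 ^ d" using d by (metis Suc_le_eq One_nat_def power_increasing power_one_right numeral_le_one_iff semiring_norm(69) not_less one_le_numeral)
    then show ?thesis using Pw_ge[OF a, where s=0 and k=d] by simp
  qed
  then have "\<bar>a\<bar> < 1" using ab(3) by simp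
  then have a1: "1 - a \<noteq> 0" by auto
  have "y = a * y + b" using pi_shift[OF a, of d] ab(4) sh y_def by simp
  then have "y = b / (1 - a)" using a1 by (simp add: field_simps)
  then have yQ: "y \<in> \<rat>" using ab by simp
  obtain a' b' where ab': "a' \<in> \<rat>" "b' \<in> \<rat>"
    "\<forall>x. word_comp (ifs_map p q r) \<omega> s x = a' * x + b'" using wc_affine[OF w] by blast
  have "coding_map (ifs_map p q r) \<omega> = a' * y + b'"
    using pi_shift[OF w, of s] ab'(3) y_def \<alpha>_def by simp
  then show ?thesis using ab' yQ by simp
qed

lemma rat_evper:
  assumes w: "\<omega> \<in> words E" and rat: "coding_map (ifs_map p q r) \<omega> \<in> \<rat>"
  shows "\<exists>n m. m > 0 \<and> (\<forall>i\<ge>n. \<omega> (i + m) = \<omega> i)"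
proof -
  obtain N0 D :: int where D: "D > 0" "coding_map (ifs_map p q r) \<omega> = of_int N0 / of_int D"
    using Rats_cases'[OF rat] by metis
  define f where "f j = coding_map (ifs_map p q r) (shiftw j \<omega>)" for j
  have fN: "\<exists>N::int. f j = of_int N / of_int D" for j
  proof (induction j)
    case 0 then show ?case using D by (simp add: f_def)
  next
    case (Suc j)
    then obtain N where N: "f j = of_int N / of_int D" by blast
    define c where "c = \<omega> j"
    have cE: "c \<in> E" using w by (simp add: c_def words_def)
    have q0: "real (q c) > 0" using qE[OF cE] by simp
    have pp: "real_of_int (p c) * real_of_int (p c) = 1" using pE[OF cE] by auto
    define z where "z = f (Suc j)"
    have "f j = ifs_map p q r c z"
      using pi_cons[OF shiftw_words[OF w, of j]] by (simp add: f_def z_def c_def)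
    then have "real (q c) * f j = real_of_int (p c) * z + real_of_int (r c)"
      using q0 by (simp add: ifs_map_def field_simps)
    then have "real_of_int (p c) * (real (q c) * f j - real_of_int (r c)) = z"
      using pp by (simp add: algebra_simps)
    then have "z = of_int (p c * (int (q c) * N - r c * D)) / of_int D"
      using N D by (simp add: field_simps)
    then show ?case unfolding z_def by (rule exI)
  qed
  define S where "S = (\<lambda>N::int. real_of_int N / real_of_int D) ` {\<lfloor>lo * D\<rfloor>..\<lceil>hi * D\<rceil>}"
  have fS: "range f \<subseteq> S"
  proof
    fix x assume "x \<in> range f"
    then obtain j where x: "x = f j" by blast
    obtain N where N: "f j = of_int N / of_int D" using fN by blast
    have "f j \<in> {lo..hi}" unfolding f_def by (rule pi_in[OF shiftw_words[OF w]])
    then have "lo * D \<le> N" "N \<le> hi * D" using N D by (auto simp: field_simps)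
    then have "of_int \<lfloor>lo * D\<rfloor> \<le> real_of_int N" "real_of_int N \<le> of_int \<lceil>hi * D\<rceil>"
      by (meson of_int_floor_le order_trans le_of_int_ceiling)+
    then have "N \<in> {\<lfloor>lo * D\<rfloor>..\<lceil>hi * D\<rceil>}" by simp
    then show "x \<in> S" unfolding S_def x N by blast
  qed
  have "finite S" unfolding S_def by simp
  then have "finite (range f)" using fS finite_subset by blast
  then have "\<not> inj f" using finite_imageD infinite_UNIV_nat by blast
  then obtain j j' where jj: "j \<noteq> j'" "f j = f j'" unfolding inj_def by blast
  have key: "\<exists>n m. m > 0 \<and> (\<forall>i\<ge>n. \<omega> (i + m) = \<omega> i)" if "j < j'" "f j = f j'" for j j'
  proof -
    have eq: "shiftw j \<omega> = shiftw j' \<omega>"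
      using pi_inj[OF shiftw_words[OF w] shiftw_words[OF w]] that(2) by (simp add: f_def)
    have "\<forall>i\<ge>j. \<omega> (i + (j' - j)) = \<omega> i"
    proof (intro allI impI)
      fix i assume "j \<le> i"
      have "shiftw j' \<omega> (i - j) = shiftw j \<omega> (i - j)" using eq by simp
      moreover have "j' + (i - j) = i + (j' - j)" using \<open>j \<le> i\<close> that(1) by simp
      ultimately show "\<omega> (i + (j' - j)) = \<omega> i" using \<open>j \<le> i\<close> by simp
    qed
    then show ?thesis using that(1) by (intro exI[of _ j] exI[of _ "j' - j"]) simp
  qed
  show ?thesis
  proof (cases "j < j'")
    case True then show ?thesis using key jj by blast
  next
    case False then have "j' < j" using jj by simp
    then show ?thesis using key jj by metis
  qed
qed

end

lemma per_iter:
  fixes i n m j :: nat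
  assumes "\<forall>i\<ge>n. \<omega> (i + m) = \<omega> i" "i \<ge> n"
  shows "\<omega> (i + j * m) = \<omega> i"
proof (induction j)
  case (Suc j)
  have "\<omega> (i + Suc j * m) = \<omega> ((i + j * m) + m)" by (simp add: add_ac)
  also have "\<dots> = \<omega> (i + j * m)" using assms by simp
  finally show ?case using Suc by simp
qed simp

lemma idenom:
  assumes w: "\<omega> \<in> words E" and ev: "\<exists>n m. m > 0 \<and> (\<forall>i\<ge>n. \<omega> (i + m) = \<omega> i)"
  shows "min_period \<omega> > 0" "\<forall>i\<ge>preperiod \<omega>. \<omega> (i + min_period \<omega>) = \<omega> i"
    "Pw q \<omega> 0 (preperiod \<omega> + min_period \<omega>) / 2 \<le> of_int (intrinsic_denom p q \<omega>)"
    "of_int (intrinsic_denom p q \<omega>) \<le> 2 * Pw q \<omega> 0 (preperiod \<omega> + min_period \<omega>)"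
    "\<forall>s d. d > 0 \<and> (\<forall>i\<ge>s. \<omega> (i + d) = \<omega> i) \<longrightarrow> preperiod \<omega> + min_period \<omega> \<le> s + d"
proof -
  define n where "n = preperiod \<omega>"
  define m where "m = min_period \<omega>"
  have nP: "\<exists>m>0. \<forall>i\<ge>n. \<omega> (i + m) = \<omega> i"
    unfolding n_def preperiod_def by (rule LeastI_ex) (use ev in blast)
  have mP: "m > 0 \<and> (\<forall>i\<ge>n. \<omega> (i + m) = \<omega> i)"
    unfolding m_def min_period_def n_def[symmetric] by (rule LeastI_ex) (use nP in blast)
  then show "min_period \<omega> > 0" "\<forall>i\<ge>preperiod \<omega>. \<omega> (i + min_period \<omega>) = \<omega> i"
    by (simp_all add: m_def n_def)
  show "\<forall>s d. d > 0 \<and> (\<forall>i\<ge>s. \<omega> (i + d) = \<omega> i) \<longrightarrow> preperiod \<omega> + min_period \<omega> \<le> s + d"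
  proof (intro allI impI)
    fix s d assume sd: "d > 0 \<and> (\<forall>i\<ge>s. \<omega> (i + d) = \<omega> i)"
    have ns: "n \<le> s" unfolding n_def preperiod_def by (rule Least_le) (use sd in blast)
    obtain m0 where m0: "m0 > 0" "\<forall>i\<ge>n. \<omega> (i + m0) = \<omega> i" using nP by blast
    have "\<forall>i\<ge>n. \<omega> (i + d) = \<omega> i"
    proof (intro allI impI)
      fix i assume i: "n \<le> i"
      have "s * m0 \<ge> s" using m0(1) by simp
      have "\<omega> (i + d) = \<omega> ((i + d) + s * m0)" using per_iter[OF m0(2), of "i+d" s] i by simp
      also have "\<dots> = \<omega> ((i + s * m0) + d)" by (simp add: add_ac)
      also have "\<dots> = \<omega> (i + s * m0)"
      proof -
        have "s \<le> i + s * m0" using \<open>s * m0 \<ge> s\<close> by linarith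
        then show ?thesis using sd by blast
      qed
      also have "\<dots> = \<omega> i" using per_iter[OF m0(2) i] .
      finally show "\<omega> (i + d) = \<omega> i" .
    qed
    then have "m \<le> d" unfolding m_def min_period_def n_def[symmetric] by (intro Least_le) (use sd in blast)
    then show "preperiod \<omega> + min_period \<omega> \<le> s + d" using ns by (simp add: m_def n_def)
  qed
  define q1 where "q1 = (\<Prod>i<n. int (q (\<omega> i)))"
  define q2 where "q2 = (\<Prod>i<m. int (q (\<omega> (n + i))))"
  define p2 where "p2 = (\<Prod>i<m. p (\<omega> (n + i)))"
  have id: "intrinsic_denom p q \<omega> = q1 * (q2 - p2)"
    unfolding intrinsic_denom_def Let_def q1_def q2_def p2_def n_def m_def ..
  have rq1: "real_of_int q1 = Pw q \<omega> 0 n" unfolding q1_def Pw_def by simp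
  have rq2: "real_of_int q2 = Pw q \<omega> n m" unfolding q2_def Pw_def by simp
  have "\<bar>p2\<bar> = (\<Prod>i<m. \<bar>p (\<omega> (n + i))\<bar>)" unfolding p2_def by (rule abs_prod)
  also have "\<dots> = 1"
  proof (rule prod.neutral, rule ballI)
    fix x have "\<omega> (n + x) \<in> E" using w by (simp add: words_def)
    then show "\<bar>p (\<omega> (n + x))\<bar> = 1" using pE by fastforce
  qed
  finally have p2: "\<bar>real_of_int p2\<bar> = 1" by simp
  have "Pw q \<omega> n m \<ge> 2 ^ m" by (rule Pw_ge[OF w])
  moreover have "(2::real) ^ m \<ge> 2 ^ 1" using mP by (intro power_increasing) auto
  ultimately have q2ge: "Pw q \<omega> n m \<ge> 2" by simp
  have q1pos: "Pw q \<omega> 0 n > 0" by (rule Pw_pos[OF w])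
  have tot: "Pw q \<omega> 0 (n + m) = Pw q \<omega> 0 n * Pw q \<omega> n m" using Pw_add[of q \<omega> 0 n m] by simp
  have lo2: "Pw q \<omega> n m / 2 \<le> Pw q \<omega> n m - real_of_int p2" using p2 q2ge by auto
  have hi2: "Pw q \<omega> n m - real_of_int p2 \<le> 2 * Pw q \<omega> n m" using p2 q2ge by auto
  have r: "real_of_int (intrinsic_denom p q \<omega>) = Pw q \<omega> 0 n * (Pw q \<omega> n m - real_of_int p2)"
    unfolding id using rq1 rq2 by simp
  show "Pw q \<omega> 0 (preperiod \<omega> + min_period \<omega>) / 2 \<le> of_int (intrinsic_denom p q \<omega>)"
    unfolding r n_def[symmetric] m_def[symmetric] tot
    using mult_left_mono[OF lo2, of "Pw q \<omega> 0 n"] q1pos by simp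
  show "of_int (intrinsic_denom p q \<omega>) \<le> 2 * Pw q \<omega> 0 (preperiod \<omega> + min_period \<omega>)"
    unfolding r n_def[symmetric] m_def[symmetric] tot
    using mult_left_mono[OF hi2, of "Pw q \<omega> 0 n"] q1pos by simp
qed

end

lemma length_subword[simp]: "length (subword \<omega> s k) = k"
  by (simp add: subword_def)

lemma subword_eq_iff: "subword \<omega> s k = subword \<omega> t k \<longleftrightarrow> (\<forall>j<k. \<omega> (s + j) = \<omega> (t + j))"
  unfolding list_eq_iff_nth_eq by (auto simp: subword_def nth_map_upt)

lemma log_psi_ln: "P > 0 \<Longrightarrow> log_psi \<psi> (ln P) = - ln (\<psi> P)"
  by (simp add: log_psi_def)

context
  fixes E :: "'a set" and p :: "'a \<Rightarrow> int" and q :: "'a \<Rightarrow> nat" and r :: "'a \<Rightarrow> int"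
    and lo hi :: real and \<psi> :: "real \<Rightarrow> real"
  assumes ifs: "rational_IFS E p q r"
    and lohi: "lo \<le> hi"
    and inv: "\<forall>a\<in>E. ifs_map p q r a ` {lo..hi} \<subseteq> {lo..hi}"
    and disj: "\<forall>a\<in>E. \<forall>b\<in>E. a \<noteq> b \<longrightarrow> ifs_map p q r a ` {lo..hi} \<inter> ifs_map p q r b ` {lo..hi} = {}"
    and psi_pos: "\<forall>t>0. \<psi> t > 0"
    and psi_noninc: "\<forall>s t. 0 < s \<and> s \<le> t \<longrightarrow> \<psi> t \<le> \<psi> s"
begin

lemmas pc = pi_close[OF ifs lohi inv disj]
lemmas ppr = pi_per_rat[OF ifs lohi inv disj]
lemmas rev = rat_evper[OF ifs lohi inv disj]
lemmas pfar = pi_far[OF ifs lohi inv disj]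
lemmas idn = idenom[OF ifs]
lemmas Pwpos = Pw_pos[OF ifs]
lemmas Pwmono = Pw_mono[OF ifs]
lemmas Pwge = Pw_ge[OF ifs]
lemmas swords = shiftw_words
lemmas expl = exp_pseudolength[OF ifs]

lemma pl_ln: "\<omega> \<in> words E \<Longrightarrow> pseudolength q (subword \<omega> s k) = ln (Pw q \<omega> s k)"
  using expl[of \<omega> s k] by (metis ln_exp)

lemma Psi_mono: "0 < P \<Longrightarrow> P \<le> P' \<Longrightarrow> log_psi \<psi> (ln P) \<le> log_psi \<psi> (ln P')"
proof -
  assume P: "0 < P" "P \<le> P'"
  have "\<psi> P' \<le> \<psi> P" using psi_noninc P by blast
  moreover have "\<psi> P' > 0" using psi_pos P by simp
  ultimately show ?thesis using P by (simp add: log_psi_ln)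
qed

lemma dir1_core:
  assumes w: "\<omega> \<in> words E" and eps: "\<epsilon> > 0" and c2: "c2 > 0" "\<forall>t>0. c2 * \<psi> t \<le> \<psi> (2 * t)"
    and bad: "\<forall>\<omega>'\<in>words E. coding_map (ifs_map p q r) \<omega>' \<in> \<rat> \<longrightarrow>
        \<bar>coding_map (ifs_map p q r) \<omega> - coding_map (ifs_map p q r) \<omega>'\<bar> \<ge>
          \<epsilon> * \<psi> (of_int (intrinsic_denom p q \<omega>')) / of_int (intrinsic_denom p q \<omega>')"
    and st: "s < t" "t + k \<le> L" and eq: "subword \<omega> s k = subword \<omega> t k"
  shows "pseudolength q (subword \<omega> t k) \<le> ln (2 * (hi - lo + 1) / (\<epsilon> * c2)) +
     log_psi \<psi> (pseudolength q (subword \<omega> 0 (L - k)))"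
proof -
  define d where "d = t - s"
  have d: "d > 0" "t = s + d" using st by (auto simp: d_def)
  define \<omega>' where "\<omega>' i = (if i < s then \<omega> i else \<omega> (s + (i - s) mod d))" for i
  have w': "\<omega>' \<in> words E" using w by (simp add: words_def \<omega>'_def)
  have per: "\<forall>i\<ge>s. \<omega>' (i + d) = \<omega>' i"
  proof (intro allI impI)
    fix i assume "s \<le> i"
    then have "(i + d - s) mod d = (i - s) mod d"
      by (metis Nat.add_diff_assoc2 mod_add_self2)
    then show "\<omega>' (i + d) = \<omega>' i" using \<open>s \<le> i\<close> by (simp add: \<omega>'_def)
  qed
  have sw: "\<forall>j<k. \<omega> (s + j) = \<omega> (t + j)" using eq subword_eq_iff by blast
  have agree: "\<omega>' i = \<omega> i" if "i < t + k" for i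
    using that
  proof (induction i rule: less_induct)
    case (less i)
    show ?case
    proof (cases "i < t")
      case True
      show ?thesis
      proof (cases "i < s")
        case True then show ?thesis by (simp add: \<omega>'_def)
      next
        case False
        then have "(i - s) mod d = i - s" using \<open>i < t\<close> d by simp
        then show ?thesis using False by (simp add: \<omega>'_def)
      qed
    next
      case False
      define j where "j = i - t"
      have j: "j < k" "i = t + j" using False less.prems by (auto simp: j_def)
      have "\<omega>' i = \<omega>' ((s + j) + d)" using j d by (simp add: add_ac)
      also have "\<dots> = \<omega>' (s + j)" using per by simp
      also have "\<dots> = \<omega> (s + j)" using less.IH[of "s + j"] j d by simp
      also have "\<dots> = \<omega> i" using sw j by simp
      finally show ?thesis .
    qed
  qed
  have rat: "coding_map (ifs_map p q r) \<omega>' \<in> \<rat>" by (rule ppr[OF w' d(1) per])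
  have ev: "\<exists>n m. m > 0 \<and> (\<forall>i\<ge>n. \<omega>' (i + m) = \<omega>' i)" using per d by blast
  define n where "n = preperiod \<omega>'"
  define m where "m = min_period \<omega>'"
  define qi where "qi = real_of_int (intrinsic_denom p q \<omega>')"
  define A where "A = Pw q \<omega> 0 t"
  define B where "B = Pw q \<omega> t k"
  have Apos: "A > 0" "B > 0" unfolding A_def B_def by (simp_all add: Pwpos[OF w])
  have nm: "n + m \<le> t" using idn(5)[OF w' ev] d per unfolding n_def m_def by auto
  have qi1: "Pw q \<omega>' 0 (n + m) / 2 \<le> qi" "qi \<le> 2 * Pw q \<omega>' 0 (n + m)"
    using idn(3,4)[OF w' ev] unfolding qi_def n_def m_def by auto
  have "Pw q \<omega>' 0 (n + m) \<le> Pw q \<omega>' 0 t" using Pwmono[OF w' nm] .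
  also have "\<dots> = A" unfolding A_def by (rule Pw_cong) (use agree in auto)
  finally have qiA: "qi \<le> 2 * A" using qi1 by simp
  have qipos: "qi > 0" using qi1 Pwpos[OF w', of 0 "n+m"] by simp
  have "\<psi> (2 * A) \<le> \<psi> qi" using psi_noninc qipos qiA by blast
  moreover have "c2 * \<psi> A \<le> \<psi> (2 * A)" using c2 Apos by simp
  ultimately have psiqi: "c2 * \<psi> A \<le> \<psi> qi" by simp
  have psiA: "\<psi> A > 0" using psi_pos Apos by simp
  have "\<epsilon> * (c2 * \<psi> A) / (2 * A) \<le> \<epsilon> * \<psi> qi / qi"
  proof (rule frac_le)
    show "0 \<le> \<epsilon> * \<psi> qi" using eps psi_pos qipos by (simp add: less_imp_le)
    show "\<epsilon> * (c2 * \<psi> A) \<le> \<epsilon> * \<psi> qi" using psiqi eps by simp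
  qed (use qipos qiA in auto)
  also have "\<dots> \<le> \<bar>coding_map (ifs_map p q r) \<omega> - coding_map (ifs_map p q r) \<omega>'\<bar>"
    using bad w' rat unfolding qi_def by blast
  also have "\<dots> \<le> (hi - lo) / Pw q \<omega> 0 (t + k)"
    by (rule pc[OF w w']) (use agree in auto)
  also have "Pw q \<omega> 0 (t + k) = A * B" unfolding A_def B_def using Pw_add[of q \<omega> 0 t k] by simp
  also have "(hi - lo) / (A * B) \<le> (hi - lo + 1) / (A * B)" using Apos by (simp add: divide_right_mono)
  finally have main: "\<epsilon> * (c2 * \<psi> A) / (2 * A) \<le> (hi - lo + 1) / (A * B)" .
  define Z where "Z = hi - lo + 1"
  have Z: "Z > 0" using lohi by (simp add: Z_def)
  have "B \<le> (2 * Z / (\<epsilon> * c2)) / \<psi> A"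
    using main Apos eps c2 psiA Z unfolding Z_def[symmetric] by (simp add: field_simps)
  then have f1: "ln B \<le> ln ((2 * Z / (\<epsilon> * c2)) / \<psi> A)" using Apos by simp
  have f2: "ln ((2 * Z / (\<epsilon> * c2)) / \<psi> A) = ln (2 * Z / (\<epsilon> * c2)) - ln (\<psi> A)"
    using Z eps c2 psiA by (intro ln_divide_pos) auto
  have f3: "- ln (\<psi> A) = log_psi \<psi> (ln A)" using Apos by (simp add: log_psi_ln)
  have f4: "log_psi \<psi> (ln A) \<le> log_psi \<psi> (ln (Pw q \<omega> 0 (L - k)))"
    unfolding A_def by (rule Psi_mono) (use Pwpos[OF w] st Pwmono[OF w] in auto)
  have "ln B \<le> ln (2 * Z / (\<epsilon> * c2)) + log_psi \<psi> (ln (Pw q \<omega> 0 (L - k)))"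
    using f1 f2 f3 f4 by linarith
  then show ?thesis unfolding pl_ln[OF w] B_def Z_def by simp
qed


lemma pl_ge: assumes w: "\<omega> \<in> words E" shows "pseudolength q (subword \<omega> s R) \<ge> real R * ln 2"
proof -
  have "(\<Sum>i<R. ln (2::real)) \<le> (\<Sum>i<R. ln (real (q (\<omega> (s + i)))))"
  proof (rule sum_mono)
    fix i have "q (\<omega> (s + i)) \<ge> 2" using qE[OF ifs] w by (simp add: words_def)
    then show "ln (2::real) \<le> ln (real (q (\<omega> (s + i))))" by simp
  qed
  then show ?thesis unfolding pseudolength_subword by simp
qed

lemma dir2_core:
  assumes w: "\<omega> \<in> words E"
    and Kc: "\<And>s t R L. s \<noteq> t \<Longrightarrow> s + R \<le> L \<Longrightarrow> t + R \<le> L \<Longrightarrow> subword \<omega> s R = subword \<omega> t R \<Longrightarrow>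
       pseudolength q (subword \<omega> t R) \<le> K + log_psi \<psi> (pseudolength q (subword \<omega> 0 (L - R)))"
    and M: "M > 0" "\<forall>t>0. \<psi> t \<le> M"
    and C: "C > 0" "\<forall>t>0. \<psi> ((1/2) * t) \<le> C * \<psi> t"
    and \<delta>: "\<delta> > 0" "\<forall>\<omega>\<in>words E. \<forall>\<omega>'\<in>words E. \<forall>k. (\<forall>i<k. \<omega> i = \<omega>' i) \<and> \<omega> k \<noteq> \<omega>' k \<longrightarrow>
   \<delta> / Pw q \<omega> 0 k \<le> \<bar>coding_map (ifs_map p q r) \<omega> - coding_map (ifs_map p q r) \<omega>'\<bar>"
    and w': "\<omega>' \<in> words E" and rat': "coding_map (ifs_map p q r) \<omega>' \<in> \<rat>"
    and eps: "\<epsilon> = min (\<delta> / (2 * M)) (\<delta> * exp (- K) / (2 * C))"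
  shows "\<epsilon> * \<psi> (of_int (intrinsic_denom p q \<omega>')) / of_int (intrinsic_denom p q \<omega>') \<le>
     \<bar>coding_map (ifs_map p q r) \<omega> - coding_map (ifs_map p q r) \<omega>'\<bar>"
proof -
  have ev: "\<exists>n m. m > 0 \<and> (\<forall>i\<ge>n. \<omega>' (i + m) = \<omega>' i)" by (rule rev[OF w' rat'])
  define n where "n = preperiod \<omega>'"
  define m where "m = min_period \<omega>'"
  define qi where "qi = real_of_int (intrinsic_denom p q \<omega>')"
  define Qt where "Qt = Pw q \<omega>' 0 (n + m)"
  have mpos: "m > 0" using idn(1)[OF w' ev] by (simp add: m_def)
  have per: "\<forall>i\<ge>n. \<omega>' (i + m) = \<omega>' i" using idn(2)[OF w' ev] by (simp add: m_def n_def)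
  have qi1: "Qt / 2 \<le> qi" "qi \<le> 2 * Qt"
    using idn(3,4)[OF w' ev] unfolding qi_def n_def m_def Qt_def by auto
  have Qtpos: "Qt > 0" unfolding Qt_def by (rule Pwpos[OF w'])
  have qipos: "qi > 0" using qi1 Qtpos by simp
  have epsnn: "\<epsilon> \<ge> 0" using eps \<delta> M C by simp
  have ne: "\<omega>' \<noteq> \<omega>"
  proof
    assume eqw: "\<omega>' = \<omega>"
    define T where "T = log_psi \<psi> (pseudolength q (subword \<omega> 0 (n + m)))"
    obtain R :: nat where R: "K + T < real R * ln 2" using ex_less_of_nat_mult[of "ln (2::real)" "K + T"] by auto
    have sub: "subword \<omega> (n + m) R = subword \<omega> n R"
      unfolding subword_eq_iff
    proof (intro allI impI)
      fix j show "\<omega> (n + m + j) = \<omega> (n + j)" using per[rule_format, of "n + j"] eqw by (simp add: add_ac)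
    qed
    have "pseudolength q (subword \<omega> n R) \<le> K + log_psi \<psi> (pseudolength q (subword \<omega> 0 (n + m + R - R)))"
      by (rule Kc[OF _ _ _ sub]) (use mpos in auto)
    then have "pseudolength q (subword \<omega> n R) \<le> K + T" by (simp add: T_def)
    then show False using pl_ge[OF w, where s=n and R=R] R by simp
  qed
  then have "\<exists>i. \<omega> i \<noteq> \<omega>' i" by auto
  define k where "k = (LEAST i. \<omega> i \<noteq> \<omega>' i)"
  have kne: "\<omega> k \<noteq> \<omega>' k" using LeastI_ex[OF \<open>\<exists>i. \<omega> i \<noteq> \<omega>' i\<close>] k_def by simp
  have lt: "\<forall>i<k. \<omega> i = \<omega>' i" using not_less_Least k_def by blast
  have far: "\<delta> / Pw q \<omega> 0 k \<le> \<bar>coding_map (ifs_map p q r) \<omega> - coding_map (ifs_map p q r) \<omega>'\<bar>"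
    using \<delta>(2) w w' lt kne by blast
  have psiqi: "\<psi> qi > 0" using psi_pos qipos by simp
  show ?thesis unfolding qi_def[symmetric]
  proof (cases "k \<le> n + m")
    case True
    have "Pw q \<omega> 0 k = Pw q \<omega>' 0 k" by (rule Pw_cong) (use lt in auto)
    also have "\<dots> \<le> Qt" unfolding Qt_def by (rule Pwmono[OF w' True])
    finally have PQ: "Pw q \<omega> 0 k \<le> Qt" .
    have "\<epsilon> * \<psi> qi \<le> (\<delta> / (2 * M)) * M"
      using eps M psiqi qipos epsnn by (intro mult_mono) auto
    also have "\<dots> = \<delta> / 2" using M by simp
    finally have e1: "\<epsilon> * \<psi> qi \<le> \<delta> / 2" .
    have "\<epsilon> * \<psi> qi / qi \<le> (\<delta> / 2) / (Qt / 2)"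
      by (rule frac_le) (use e1 \<delta> Qtpos qi1 in auto)
    also have "\<dots> = \<delta> / Qt" by simp
    also have "\<dots> \<le> \<delta> / Pw q \<omega> 0 k"
      using PQ \<delta> Pwpos[OF w, of 0 k] Qtpos by (intro divide_left_mono) auto
    finally show "\<epsilon> * \<psi> qi / qi \<le> \<bar>coding_map (ifs_map p q r) \<omega> - coding_map (ifs_map p q r) \<omega>'\<bar>"
      using far by simp
  next
    case False
    define R where "R = k - (n + m)"
    have kR: "k = n + m + R" using False by (simp add: R_def)
    have sub: "subword \<omega> n R = subword \<omega> (n + m) R"
      unfolding subword_eq_iff
    proof (intro allI impI)
      fix j assume j: "j < R"
      have "\<omega> (n + m + j) = \<omega>' (n + m + j)" using lt kR j by simp
      also have "\<dots> = \<omega>' (n + j)" using per[rule_format, of "n + j"] by (simp add: add_ac)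
      also have "\<dots> = \<omega> (n + j)" using lt kR j mpos by simp
      finally show "\<omega> (n + j) = \<omega> (n + m + j)" by simp
    qed
    have "pseudolength q (subword \<omega> (n + m) R) \<le> K + log_psi \<psi> (pseudolength q (subword \<omega> 0 (k - R)))"
      by (rule Kc[OF _ _ _ sub]) (use mpos kR in auto)
    define A where "A = Pw q \<omega> 0 (n + m)"
    define B where "B = Pw q \<omega> (n + m) R"
    have AQ: "A = Qt" unfolding A_def Qt_def by (rule Pw_cong) (use lt kR in auto)
    have Apos: "A > 0" "B > 0" unfolding A_def B_def by (simp_all add: Pwpos[OF w])
    have psiA: "\<psi> A > 0" using psi_pos Apos by simp
    have lnB: "ln B \<le> K - ln (\<psi> A)"
      using \<open>pseudolength q (subword \<omega> (n + m) R) \<le> _\<close> kR Apos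
      unfolding pl_ln[OF w] A_def B_def by (simp add: log_psi_ln)
    have "B = exp (ln B)" using Apos by simp
    also have "\<dots> \<le> exp (K - ln (\<psi> A))" using lnB by simp
    also have "\<dots> = exp K / \<psi> A" using psiA by (simp add: exp_diff)
    finally have Bb: "B \<le> exp K / \<psi> A" .
    have Pk: "Pw q \<omega> 0 k = A * B" unfolding A_def B_def kR using Pw_add[of q \<omega> 0 "n+m" R] by simp
    have "\<psi> qi \<le> \<psi> (A / 2)" using psi_noninc qi1 AQ Apos by auto
    also have "\<psi> (A / 2) = \<psi> ((1/2) * A)" by simp
    also have "\<dots> \<le> C * \<psi> A" using C Apos by simp
    finally have psb: "\<psi> qi \<le> C * \<psi> A" .
    have e1: "\<epsilon> * \<psi> qi / qi \<le> \<epsilon> * (C * \<psi> A) / (A / 2)"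
      by (rule frac_le) (use epsnn psb psiA C qi1 AQ Apos mult_left_mono in auto)
    have "\<epsilon> * C \<le> (\<delta> * exp (- K) / (2 * C)) * C" using eps C by (intro mult_right_mono) auto
    also have "\<dots> = \<delta> * exp (- K) / 2" using C by simp
    finally have eC: "\<epsilon> * C \<le> \<delta> * exp (- K) / 2" .
    have "\<epsilon> * (C * \<psi> A) / (A / 2) = (\<epsilon> * C) * (2 * \<psi> A / A)" by (simp add: field_simps)
    also have "\<dots> \<le> (\<delta> * exp (- K) / 2) * (2 * \<psi> A / A)"
      using eC psiA Apos by (intro mult_right_mono) auto
    also have "\<dots> = \<delta> / (A * (exp K / \<psi> A))" using psiA Apos by (simp add: field_simps exp_minus)
    also have "\<dots> \<le> \<delta> / (A * B)"
      using Bb Apos \<delta> psiA by (intro divide_left_mono mult_left_mono) auto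
    finally have "\<epsilon> * \<psi> qi / qi \<le> \<delta> / Pw q \<omega> 0 k" using e1 Pk by simp
    then show "\<epsilon> * \<psi> qi / qi \<le> \<bar>coding_map (ifs_map p q r) \<omega> - coding_map (ifs_map p q r) \<omega>'\<bar>"
      using far by simp
  qed
qed

end
theorem lemma4p3:
  fixes E :: "'a set" and p :: "'a \<Rightarrow> int" and q :: "'a \<Rightarrow> nat" and r :: "'a \<Rightarrow> int"
    and \<psi> :: "real \<Rightarrow> real" and \<omega> :: "nat \<Rightarrow> 'a"
  assumes ifs: "rational_IFS E p q r"
    and ssc: "strong_separation E (ifs_map p q r)"
    and psi_pos: "\<forall>t>0. \<psi> t > 0"
    and psi_noninc: "\<forall>s t. 0 < s \<and> s \<le> t \<longrightarrow> \<psi> t \<le> \<psi> s"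
    and psi_bdd: "\<exists>M. \<forall>t>0. \<psi> t \<le> M"
    and psi_sv: "slowly_varying \<psi>"
    and \<omega>: "\<omega> \<in> words E"
  shows "badly_symb_approx E p q r \<psi> (coding_map (ifs_map p q r) \<omega>) \<longleftrightarrow>
    (\<exists>K. \<forall>L::nat. \<forall>\<eta>::'a list.
       (\<exists>s t. s \<noteq> t \<and> s + length \<eta> \<le> L \<and> t + length \<eta> \<le> L \<and>
              subword \<omega> s (length \<eta>) = \<eta> \<and> subword \<omega> t (length \<eta>) = \<eta>) \<longrightarrow>
       pseudolength q \<eta> \<le> K + log_psi \<psi> (pseudolength q (subword \<omega> 0 (L - length \<eta>))))"
proof -
  obtain lo hi where H: "lo \<le> hi \<and>
     (\<forall>a\<in>E. ifs_map p q r a ` {lo..hi} \<subseteq> {lo..hi}) \<and>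
     (\<forall>a\<in>E. \<forall>b\<in>E. a \<noteq> b \<longrightarrow> ifs_map p q r a ` {lo..hi} \<inter> ifs_map p q r b ` {lo..hi} = {})"
    using ssc[unfolded strong_separation_def] by (elim exE) (rule that)
  have lohi: "lo \<le> hi"
    and inv: "\<forall>a\<in>E. ifs_map p q r a ` {lo..hi} \<subseteq> {lo..hi}"
    and disj: "\<forall>a\<in>E. \<forall>b\<in>E. a \<noteq> b \<longrightarrow> ifs_map p q r a ` {lo..hi} \<inter> ifs_map p q r b ` {lo..hi} = {}"
    using H by (rule conjunct1, rule conjunct1[OF conjunct2], rule conjunct2[OF conjunct2])
  note d1 = dir1_core[OF ifs lohi inv disj psi_pos psi_noninc]
  note d2 = dir2_core[OF ifs lohi inv disj psi_pos psi_noninc]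
  show ?thesis
  proof
    assume "badly_symb_approx E p q r \<psi> (coding_map (ifs_map p q r) \<omega>)"
    then obtain \<epsilon> where eps: "\<epsilon> > 0" and bad: "\<forall>\<omega>'\<in>words E. coding_map (ifs_map p q r) \<omega>' \<in> \<rat> \<longrightarrow>
        \<bar>coding_map (ifs_map p q r) \<omega> - coding_map (ifs_map p q r) \<omega>'\<bar> \<ge>
          \<epsilon> * \<psi> (of_int (intrinsic_denom p q \<omega>')) / of_int (intrinsic_denom p q \<omega>')"
      unfolding badly_symb_approx_def by blast
    have "\<exists>c C. 0 < c \<and> c \<le> C \<and> (\<forall>t>0. c * \<psi> t \<le> \<psi> (2 * t) \<and> \<psi> (2 * t) \<le> C * \<psi> t)"
      using psi_sv[unfolded slowly_varying_def, rule_format, of 2] by simp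
    then obtain c2 C2 where c2: "0 < c2" "c2 \<le> C2" "\<forall>t>0. c2 * \<psi> t \<le> \<psi> (2 * t) \<and> \<psi> (2 * t) \<le> C2 * \<psi> t"
      by blast
    have c2': "\<forall>t>0. c2 * \<psi> t \<le> \<psi> (2 * t)" using c2(3) by blast
    show "\<exists>K. \<forall>L::nat. \<forall>\<eta>::'a list.
       (\<exists>s t. s \<noteq> t \<and> s + length \<eta> \<le> L \<and> t + length \<eta> \<le> L \<and>
              subword \<omega> s (length \<eta>) = \<eta> \<and> subword \<omega> t (length \<eta>) = \<eta>) \<longrightarrow>
       pseudolength q \<eta> \<le> K + log_psi \<psi> (pseudolength q (subword \<omega> 0 (L - length \<eta>)))"
    proof (intro exI allI impI)
      fix L :: nat and \<eta> :: "'a list"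
      assume "\<exists>s t. s \<noteq> t \<and> s + length \<eta> \<le> L \<and> t + length \<eta> \<le> L \<and>
              subword \<omega> s (length \<eta>) = \<eta> \<and> subword \<omega> t (length \<eta>) = \<eta>"
      then obtain s t where st: "s \<noteq> t" "s + length \<eta> \<le> L" "t + length \<eta> \<le> L"
        "subword \<omega> s (length \<eta>) = \<eta>" "subword \<omega> t (length \<eta>) = \<eta>" by blast
      show "pseudolength q \<eta> \<le> ln (2 * (hi - lo + 1) / (\<epsilon> * c2)) +
         log_psi \<psi> (pseudolength q (subword \<omega> 0 (L - length \<eta>)))"
      proof (cases "s < t")
        case True
        show ?thesis using d1[OF \<omega> eps c2(1) c2' bad True st(3)] st(4,5) by simp
      next
        case False
        then have "t < s" using st(1) by simp
        show ?thesis using d1[OF \<omega> eps c2(1) c2' bad \<open>t < s\<close> st(2)] st(4,5) by simp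
      qed
    qed
  next
    assume "\<exists>K. \<forall>L::nat. \<forall>\<eta>::'a list.
       (\<exists>s t. s \<noteq> t \<and> s + length \<eta> \<le> L \<and> t + length \<eta> \<le> L \<and>
              subword \<omega> s (length \<eta>) = \<eta> \<and> subword \<omega> t (length \<eta>) = \<eta>) \<longrightarrow>
       pseudolength q \<eta> \<le> K + log_psi \<psi> (pseudolength q (subword \<omega> 0 (L - length \<eta>)))"
    then obtain K where K: "\<forall>L::nat. \<forall>\<eta>::'a list.
       (\<exists>s t. s \<noteq> t \<and> s + length \<eta> \<le> L \<and> t + length \<eta> \<le> L \<and>
              subword \<omega> s (length \<eta>) = \<eta> \<and> subword \<omega> t (length \<eta>) = \<eta>) \<longrightarrow>
       pseudolength q \<eta> \<le> K + log_psi \<psi> (pseudolength q (subword \<omega> 0 (L - length \<eta>)))" by blast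
    have Kc: "pseudolength q (subword \<omega> t R) \<le> K + log_psi \<psi> (pseudolength q (subword \<omega> 0 (L - R)))"
      if "s \<noteq> t" "s + R \<le> L" "t + R \<le> L" "subword \<omega> s R = subword \<omega> t R" for s t R L
      using K[rule_format, of "subword \<omega> t R" L] that by fastforce
    obtain M where M0: "\<forall>t>0. \<psi> t \<le> M" using psi_bdd by blast
    have "\<psi> 1 \<le> M" "\<psi> 1 > 0" using M0 psi_pos by simp_all
    then have Mpos: "M > 0" by linarith
    have "\<exists>c C. 0 < c \<and> c \<le> C \<and> (\<forall>t>0. c * \<psi> t \<le> \<psi> ((1/2) * t) \<and> \<psi> ((1/2) * t) \<le> C * \<psi> t)"
      using psi_sv[unfolded slowly_varying_def, rule_format, of "1/2"] by simp
    then obtain c C where cC: "0 < c" "c \<le> C" "\<forall>t>0. c * \<psi> t \<le> \<psi> ((1/2) * t) \<and> \<psi> ((1/2) * t) \<le> C * \<psi> t"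
      by blast
    have Cpos: "C > 0" using cC by simp
    have C': "\<forall>t>0. \<psi> ((1/2) * t) \<le> C * \<psi> t" using cC(3) by blast
    obtain \<delta> where \<delta>: "\<delta> > 0" "\<forall>\<omega>\<in>words E. \<forall>\<omega>'\<in>words E. \<forall>k. (\<forall>i<k. \<omega> i = \<omega>' i) \<and> \<omega> k \<noteq> \<omega>' k \<longrightarrow>
      \<delta> / Pw q \<omega> 0 k \<le> \<bar>coding_map (ifs_map p q r) \<omega> - coding_map (ifs_map p q r) \<omega>'\<bar>"
      using pi_far[OF ifs lohi inv disj] by blast
    define \<epsilon> where "\<epsilon> = min (\<delta> / (2 * M)) (\<delta> * exp (- K) / (2 * C))"
    have eps: "\<epsilon> > 0" unfolding \<epsilon>_def using \<delta> Mpos Cpos by simp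
    show "badly_symb_approx E p q r \<psi> (coding_map (ifs_map p q r) \<omega>)"
      unfolding badly_symb_approx_def
    proof (intro exI[of _ \<epsilon>] conjI ballI impI)
      show "\<epsilon> > 0" by (rule eps)
      fix \<omega>' assume w': "\<omega>' \<in> words E" and rat': "coding_map (ifs_map p q r) \<omega>' \<in> \<rat>"
      show "\<epsilon> * \<psi> (of_int (intrinsic_denom p q \<omega>')) / of_int (intrinsic_denom p q \<omega>') \<le>
          \<bar>coding_map (ifs_map p q r) \<omega> - coding_map (ifs_map p q r) \<omega>'\<bar>"
        by (rule d2[OF \<omega> Kc Mpos M0 Cpos C' \<delta> w' rat' \<epsilon>_def])
    qed
  qed
qed

end
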